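(* Let $C\ge1$, $k>2$ an integer, $\rho\in(0,1)$ and $M$ a positive integer. Set $\varepsilon_i=\rho/2^{i-1}$ and $C_i=\|p_{\varepsilon_i}\|_1$ for $i=1,\dots,M$; $C_{-1}=1$, $C_0=\frac{2+\rho^k}{2-\rho^k}$, $C_{M+1}=C_*$. Set $\rho_i=\frac{2\beta_i^k}{1+\beta_i^{2k}}$ with $\beta_i=\frac{1-\sqrt{1-\frac{\rho+\varepsilon_i}{1+\varepsilon_i}}}{1+\sqrt{1-\frac{\rho+\varepsilon_i}{1+\varepsilon_i}}}$ for $i=1,\dots,M$; $\rho_{-1}=\rho^k$, $\rho_0=\frac{\rho^k}{2-\rho^k}$, $\rho_{M+1}=\rho_*$. Then $$\tilde\rho(C)\le\max_{i\in\{-1,0,\dots,M\}}\max\Big(\frac{C-C_i}{C_{i+1}-C_i}\rho_{i+1}+\frac{C_{i+1}-C}{C_{i+1}-C_i}\rho_i,\ \rho_*\Big).$$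
   Context: $\mathbb{R}_k[X]$ denotes real polynomials of degree at most $k$, and $\|p\|_1$ is the sum of absolute values of the coefficients of $p$. For $C\ge1$, $\tilde\rho(C)=\min\{\max_{x\in[0,\rho]}|p(x)| : p\in\mathbb{R}_k[X],\ p(1)=1,\ \|p\|_1\le C\}$. $T_k$ is the Chebyshev polynomial of the first kind of degree $k$. For $\varepsilon\ge0$, $p_\varepsilon(X)=T_k\big(2\frac{X+\varepsilon}{\rho+\varepsilon}-1\big)/\big|T_k\big(2\frac{1+\varepsilon}{\rho+\varepsilon}-1\big)\big|$ (the minimizer of $\max_{[-\varepsilon,\rho]}|p|$ over $p\in\mathbb{R}_k[X]$ with $p(1)=1$). $C_*=\|p_0\|_1$, and $\rho_*=\frac{2\beta^k}{1+\beta^{2k}}$ with $\beta=\frac{1-\sqrt{1-\rho}}{1+\sqrt{1-\rho}}$. *)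

theory Defs
  imports "HOL-Computational_Algebra.Polynomial" "HOL-Analysis.Analysis"
begin

fun cheb :: "nat \<Rightarrow> real poly" where
  "cheb 0 = 1"
| "cheb (Suc 0) = [:0, 1:]"
| "cheb (Suc (Suc n)) = smult 2 [:0, 1:] * cheb (Suc n) - cheb n"

definition l1norm :: "real poly \<Rightarrow> real" where
  "l1norm p = (\<Sum>i\<le>degree p. \<bar>coeff p i\<bar>)"

definition rho_tilde :: "nat \<Rightarrow> real \<Rightarrow> real \<Rightarrow> real" where
  "rho_tilde k \<rho> C = Inf { Sup ((\<lambda>x. \<bar>poly p x\<bar>) ` {0..\<rho>}) | p.
      degree p \<le> k \<and> poly p 1 = 1 \<and> l1norm p \<le> C }"

definition p_eps :: "nat \<Rightarrow> real \<Rightarrow> real \<Rightarrow> real poly" where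
  "p_eps k \<rho> \<epsilon> = smult (1 / \<bar>poly (cheb k) (2 * (1 + \<epsilon>) / (\<rho> + \<epsilon>) - 1)\<bar>)
      (pcompose (cheb k) [: 2 * \<epsilon> / (\<rho> + \<epsilon>) - 1, 2 / (\<rho> + \<epsilon>) :])"

definition C_star :: "nat \<Rightarrow> real \<Rightarrow> real" where
  "C_star k \<rho> = l1norm (p_eps k \<rho> 0)"

definition beta_of :: "real \<Rightarrow> real" where
  "beta_of r = (1 - sqrt (1 - r)) / (1 + sqrt (1 - r))"

definition rho_star :: "nat \<Rightarrow> real \<Rightarrow> real" where
  "rho_star k \<rho> = 2 * beta_of \<rho> ^ k / (1 + beta_of \<rho> ^ (2 * k))"

definition eps_i :: "real \<Rightarrow> int \<Rightarrow> real" where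
  "eps_i \<rho> i = \<rho> / 2 ^ nat (i - 1)"

definition C_idx :: "nat \<Rightarrow> real \<Rightarrow> nat \<Rightarrow> int \<Rightarrow> real" where
  "C_idx k \<rho> M i =
     (if i = -1 then 1
      else if i = 0 then (2 + \<rho> ^ k) / (2 - \<rho> ^ k)
      else if i = int M + 1 then C_star k \<rho>
      else l1norm (p_eps k \<rho> (eps_i \<rho> i)))"

definition rho_idx :: "nat \<Rightarrow> real \<Rightarrow> nat \<Rightarrow> int \<Rightarrow> real" where
  "rho_idx k \<rho> M i =
     (if i = -1 then \<rho> ^ k
      else if i = 0 then \<rho> ^ k / (2 - \<rho> ^ k)
      else if i = int M + 1 then rho_star k \<rho>
      else 2 * beta_of ((\<rho> + eps_i \<rho> i) / (1 + eps_i \<rho> i)) ^ k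
             / (1 + beta_of ((\<rho> + eps_i \<rho> i) / (1 + eps_i \<rho> i)) ^ (2 * k)))"

end

theory Submission
  imports Defs
begin

lemma cheb_degree: "degree (cheb n) \<le> n"
proof (induction n rule: cheb.induct)
  case (3 n)
  have "degree (smult 2 [:0, 1:] * cheb (Suc n)) \<le> Suc (Suc n)"
    using degree_mult_le[of "smult 2 [:0, 1:]" "cheb (Suc n)"] 3(1) by simp
  then show ?case using degree_diff_le_max[of "smult 2 [:0, 1:] * cheb (Suc n)" "cheb n"] 3(2) by simp
qed auto

lemma cheb_cos: "poly (cheb n) (cos t) = cos (real n * t)"
proof (induction n rule: cheb.induct)
  case (3 n)
  have "cos (real (Suc (Suc n)) * t) + cos (real n * t) = 2 * cos t * cos (real (Suc n) * t)"
  proof -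
    have a: "real (Suc (Suc n)) * t = real (Suc n) * t + t" by (simp add: algebra_simps)
    have b: "real n * t = real (Suc n) * t - t" by (simp add: algebra_simps)
    show ?thesis unfolding a b cos_add cos_diff by simp
  qed
  then show ?case using 3 by (simp add: algebra_simps)
qed auto

lemma cheb_bound: "\<bar>y\<bar> \<le> 1 \<Longrightarrow> \<bar>poly (cheb n) y\<bar> \<le> 1"
  using cheb_cos[of n "arccos y"] cos_arccos_abs[of y] by simp

lemma cheb_z: assumes "z \<noteq> (0::real)"
  shows "poly (cheb n) ((z + inverse z) / 2) = (z ^ n + inverse z ^ n) / 2"
proof (induction n rule: cheb.induct)
  case (3 n)
  define u where "u = inverse z"
  have zu: "z * u = 1" using assms by (simp add: u_def)
  have "(z + u) * (z ^ Suc n + u ^ Suc n) = z ^ Suc (Suc n) + u ^ Suc (Suc n) + (z*u) * u ^ n + (z*u) * z^n"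
    by (simp add: algebra_simps)
  then have e: "(z + u) * (z ^ Suc n + u ^ Suc n) = z ^ Suc (Suc n) + u ^ Suc (Suc n) + u ^ n + z^n"
    using zu by simp
  have "poly (cheb (Suc (Suc n))) ((z + u) / 2) = (z + u) * poly (cheb (Suc n)) ((z + u) / 2) - poly (cheb n) ((z + u) / 2)"
    by simp
  also have "\<dots> = (z + u) * (z ^ Suc n + u ^ Suc n) / 2 - (z ^ n + u ^ n) / 2"
  proof -
    have h1: "poly (cheb (Suc n)) ((z + u) / 2) = (z ^ Suc n + u ^ Suc n) / 2" using 3(1) unfolding u_def .
    have h2: "poly (cheb n) ((z + u) / 2) = (z ^ n + u ^ n) / 2" using 3(2) unfolding u_def .
    show ?thesis unfolding h1 h2 by simp
  qed
  also have "\<dots> = (z ^ Suc (Suc n) + u ^ Suc (Suc n) + u ^ n + z ^ n) / 2 - (z ^ n + u ^ n) / 2"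
    by (subst e[symmetric]) simp
  also have "\<dots> = (z ^ Suc (Suc n) + u ^ Suc (Suc n)) / 2" by (simp add: field_simps)
  finally show ?case unfolding u_def .
qed (auto simp: assms)

lemma beta_facts:
  assumes "0 < r" "r < 1"
  shows "0 < beta_of r" "(inverse (beta_of r) + inverse (inverse (beta_of r))) / 2 = 2 / r - 1"
proof -
  define s where "s = sqrt (1 - r)"
  have s0: "0 < s" "s < 1" using assms by (auto simp: s_def)
  have s2: "s * s = 1 - r" using assms by (simp add: s_def)
  have b: "beta_of r = (1 - s) / (1 + s)" by (simp add: beta_of_def s_def)
  show "0 < beta_of r" using s0 b by simp
  have "inverse (beta_of r) + beta_of r = ((1+s)*(1+s) + (1-s)*(1-s)) / ((1-s)*(1+s))"
    using s0 unfolding b by (simp add: field_simps)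
  also have "\<dots> = 2 * (1 + s * s) / (1 - s * s)" by (simp add: algebra_simps)
  also have "\<dots> = 2 * (2 - r) / r" unfolding s2 by simp
  finally have "inverse (beta_of r) + beta_of r = 2 * (2 - r) / r" .
  then show "(inverse (beta_of r) + inverse (inverse (beta_of r))) / 2 = 2 / r - 1"
    using assms by (simp add: field_simps)
qed

lemma p_eps_props:
  assumes e: "0 \<le> \<epsilon>" and r: "0 < \<rho>" "\<rho> < 1"
  shows "degree (p_eps k \<rho> \<epsilon>) \<le> k" "poly (p_eps k \<rho> \<epsilon>) 1 = 1"
    "x \<in> {0..\<rho>} \<Longrightarrow> \<bar>poly (p_eps k \<rho> \<epsilon>) x\<bar> \<le>
       2 * beta_of ((\<rho> + \<epsilon>) / (1 + \<epsilon>)) ^ k / (1 + beta_of ((\<rho> + \<epsilon>) / (1 + \<epsilon>)) ^ (2 * k))"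
proof -
  define q where "q = [: 2 * \<epsilon> / (\<rho> + \<epsilon>) - 1, 2 / (\<rho> + \<epsilon>) :]"
  define y where "y = 2 * (1 + \<epsilon>) / (\<rho> + \<epsilon>) - 1"
  define rr where "rr = (\<rho> + \<epsilon>) / (1 + \<epsilon>)"
  define b where "b = beta_of rr"
  have rr: "0 < rr" "rr < 1" using e r by (auto simp: rr_def field_simps)
  have b0: "0 < b" using beta_facts(1)[OF rr] by (simp add: b_def)
  have yb: "y = (inverse b + inverse (inverse b)) / 2"
    using beta_facts(2)[OF rr] e r unfolding b_def y_def rr_def by (simp add: field_simps)
  have Ty: "poly (cheb k) y = (inverse b ^ k + inverse (inverse b) ^ k) / 2"
    unfolding yb by (rule cheb_z) (use b0 in simp)
  have Typos: "poly (cheb k) y > 0" unfolding Ty using b0 by (simp add: add_pos_pos)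
  have Tabs: "\<bar>inverse b ^ k + b ^ k\<bar> = inverse b ^ k + b ^ k" using b0 by simp
  have Tinv: "1 / \<bar>poly (cheb k) y\<bar> = 2 * b ^ k / (1 + b ^ (2 * k))"
  proof -
    have "1 / \<bar>poly (cheb k) y\<bar> = 2 / (inverse b ^ k + b ^ k)" unfolding Ty using Tabs by simp
    also have "\<dots> = 2 * b ^ k / ((inverse b ^ k + b ^ k) * b ^ k)" using b0 by simp
    also have "(inverse b ^ k + b ^ k) * b ^ k = 1 + b ^ (2 * k)"
    proof -
      have "inverse b ^ k * b ^ k = 1" using b0 by (simp add: power_mult_distrib[symmetric])
      moreover have "b ^ k * b ^ k = b ^ (2 * k)" by (simp add: mult_2 power_add)
      ultimately show ?thesis by (simp add: distrib_right)
    qed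
    finally show ?thesis .
  qed
  have pe: "p_eps k \<rho> \<epsilon> = smult (1 / \<bar>poly (cheb k) y\<bar>) (pcompose (cheb k) q)"
    unfolding p_eps_def q_def y_def ..
  have "degree q \<le> 1" unfolding q_def by simp
  then have "degree (pcompose (cheb k) q) \<le> k"
    using degree_pcompose_le[of "cheb k" q] cheb_degree[of k]
    by (metis le_trans mult.right_neutral mult_le_mono)
  then show "degree (p_eps k \<rho> \<epsilon>) \<le> k" unfolding pe by simp
  have "2 * (1 + \<epsilon>) / (\<rho> + \<epsilon>) = 2 * \<epsilon> / (\<rho> + \<epsilon>) + 2 / (\<rho> + \<epsilon>)"
    by (simp add: add_divide_distrib[symmetric] algebra_simps)
  then have q1: "poly q 1 = y" unfolding q_def y_def by simp
  show "poly (p_eps k \<rho> \<epsilon>) 1 = 1" unfolding pe using q1 Typos by (simp add: poly_pcompose)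
  assume x: "x \<in> {0..\<rho>}"
  have "\<bar>poly q x\<bar> \<le> 1"
  proof -
    define d where "d = \<rho> + \<epsilon>"
    have d0: "d > 0" using e r by (simp add: d_def)
    have pq: "poly q x = (2 * \<epsilon> + 2 * x) / d - 1"
      unfolding q_def d_def[symmetric] by (simp add: add_divide_distrib)
    have "(2 * \<epsilon> + 2 * x) / d \<le> 2" using d0 x by (simp add: divide_le_eq d_def)
    moreover have "(2 * \<epsilon> + 2 * x) / d \<ge> 0" using d0 x e by simp
    ultimately show ?thesis unfolding pq by simp
  qed
  then have "\<bar>poly (cheb k) (poly q x)\<bar> \<le> 1" by (rule cheb_bound)
  then have "\<bar>poly (p_eps k \<rho> \<epsilon>) x\<bar> \<le> 1 / \<bar>poly (cheb k) y\<bar>"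
    unfolding pe using Typos by (simp add: poly_pcompose divide_le_cancel)
  then show "\<bar>poly (p_eps k \<rho> \<epsilon>) x\<bar> \<le>
       2 * beta_of ((\<rho> + \<epsilon>) / (1 + \<epsilon>)) ^ k / (1 + beta_of ((\<rho> + \<epsilon>) / (1 + \<epsilon>)) ^ (2 * k))"
    unfolding Tinv b_def rr_def .
qed

lemma l1norm_upto: assumes "degree p \<le> N" shows "l1norm p = (\<Sum>i\<le>N. \<bar>coeff p i\<bar>)"
  unfolding l1norm_def
  by (rule sum.mono_neutral_left) (use assms in \<open>auto simp: le_degree\<close>)

definition good :: "nat \<Rightarrow> real \<Rightarrow> real poly \<Rightarrow> real \<Rightarrow> real \<Rightarrow> bool" where
  "good k \<rho> p c r \<longleftrightarrow> degree p \<le> k \<and> poly p 1 = 1 \<and> l1norm p \<le> c \<and> (\<forall>x\<in>{0..\<rho>}. \<bar>poly p x\<bar> \<le> r)"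

lemma good_comb:
  assumes "good k \<rho> p c1 r1" "good k \<rho> q c2 r2" "0 \<le> t" "t \<le> 1"
  shows "good k \<rho> (smult t p + smult (1 - t) q) (t * c1 + (1 - t) * c2) (t * r1 + (1 - t) * r2)"
proof -
  let ?s = "smult t p + smult (1 - t) q"
  have dp: "degree p \<le> k" and dq: "degree q \<le> k" using assms unfolding good_def by auto
  have ds: "degree ?s \<le> k"
    using degree_add_le[of "smult t p" k "smult (1 - t) q"] dp dq
    by (meson degree_smult_le le_trans)
  have "l1norm ?s = (\<Sum>i\<le>k. \<bar>t * coeff p i + (1 - t) * coeff q i\<bar>)"
    using l1norm_upto[OF ds] by simp
  also have "\<dots> \<le> (\<Sum>i\<le>k. t * \<bar>coeff p i\<bar> + (1 - t) * \<bar>coeff q i\<bar>)"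
  proof (rule sum_mono)
    fix i
    have "\<bar>t * coeff p i + (1 - t) * coeff q i\<bar> \<le> \<bar>t * coeff p i\<bar> + \<bar>(1 - t) * coeff q i\<bar>"
      by (rule abs_triangle_ineq)
    also have "\<dots> = t * \<bar>coeff p i\<bar> + (1 - t) * \<bar>coeff q i\<bar>"
      using assms(3,4) by (simp add: abs_mult)
    finally show "\<bar>t * coeff p i + (1 - t) * coeff q i\<bar> \<le> t * \<bar>coeff p i\<bar> + (1 - t) * \<bar>coeff q i\<bar>" .
  qed
  also have "\<dots> = t * l1norm p + (1 - t) * l1norm q"
    using l1norm_upto[OF dp] l1norm_upto[OF dq] by (simp add: sum.distrib sum_distrib_left)
  also have "\<dots> \<le> t * c1 + (1 - t) * c2"
    using assms unfolding good_def by (intro add_mono mult_left_mono) auto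
  finally have l: "l1norm ?s \<le> t * c1 + (1 - t) * c2" .
  have v: "\<bar>poly ?s x\<bar> \<le> t * r1 + (1 - t) * r2" if x: "x \<in> {0..\<rho>}" for x
  proof -
    have "\<bar>poly ?s x\<bar> \<le> \<bar>t * poly p x\<bar> + \<bar>(1 - t) * poly q x\<bar>"
      by (simp add: abs_triangle_ineq)
    also have "\<dots> = t * \<bar>poly p x\<bar> + (1 - t) * \<bar>poly q x\<bar>"
      using assms(3,4) by (simp add: abs_mult)
    also have "\<dots> \<le> t * r1 + (1 - t) * r2"
      using assms x unfolding good_def by (intro add_mono mult_left_mono) auto
    finally show ?thesis .
  qed
  have "poly ?s 1 = 1" using assms unfolding good_def by (simp add: algebra_simps)
  then show ?thesis using ds l v unfolding good_def by blast
qed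

lemma good_rho_tilde:
  assumes "good k \<rho> p C r" "0 \<le> \<rho>"
  shows "rho_tilde k \<rho> C \<le> r"
proof -
  define S where "S = { Sup ((\<lambda>x. \<bar>poly q x\<bar>) ` {0..\<rho>}) | q.
      degree q \<le> k \<and> poly q 1 = 1 \<and> l1norm q \<le> C }"
  have bdd: "bdd_above ((\<lambda>x. \<bar>poly q x\<bar>) ` {0..\<rho>})" for q :: "real poly"
  proof -
    have "compact ((\<lambda>x. \<bar>poly q x\<bar>) ` {0..\<rho>})"
      by (rule compact_continuous_image) (auto intro!: continuous_intros)
    then show ?thesis by (simp add: compact_imp_bounded bounded_imp_bdd_above)
  qed
  have "bdd_below S"
  proof (rule bdd_belowI[of _ 0])
    fix s assume "s \<in> S"
    then obtain q where s: "s = Sup ((\<lambda>x. \<bar>poly q x\<bar>) ` {0..\<rho>})" unfolding S_def by blast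
    have "\<bar>poly q 0\<bar> \<le> s" unfolding s by (rule cSup_upper) (use assms(2) bdd in auto)
    then show "0 \<le> s" by linarith
  qed
  moreover have mem: "Sup ((\<lambda>x. \<bar>poly p x\<bar>) ` {0..\<rho>}) \<in> S"
    using assms(1) unfolding S_def good_def by blast
  ultimately have "Inf S \<le> Sup ((\<lambda>x. \<bar>poly p x\<bar>) ` {0..\<rho>})" by (rule cInf_lower[rotated])
  also have "\<dots> \<le> r"
    by (rule cSup_least) (use assms in \<open>auto simp: good_def\<close>)
  finally show ?thesis unfolding rho_tilde_def S_def .
qed

lemma good_mono: "good k \<rho> p c r \<Longrightarrow> c \<le> c' \<Longrightarrow> good k \<rho> p c' r"
  unfolding good_def by auto

lemma good_monom: assumes "0 < \<rho>" shows "good k \<rho> (monom 1 k) 1 (\<rho> ^ k)"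
proof -
  have "l1norm (monom 1 k) = 1"
    by (simp add: l1norm_def degree_monom_eq)
  moreover have "\<bar>x ^ k\<bar> \<le> \<rho> ^ k" if "x \<in> {0..\<rho>}" for x :: real
    using that by (simp add: power_mono)
  ultimately show ?thesis unfolding good_def by (simp add: degree_monom_eq poly_monom)
qed

lemma l1norm_two: assumes "0 < k"
  shows "l1norm (monom a k + [:b:]) = \<bar>a\<bar> + \<bar>b\<bar>"
proof -
  have d: "degree (monom a k + [:b:]) \<le> k"
    by (metis degree_add_le degree_monom_le degree_pCons_0 le0)
  have "l1norm (monom a k + [:b:]) = (\<Sum>i\<le>k. (if i = k then \<bar>a\<bar> else 0) + (if i = 0 then \<bar>b\<bar> else 0))"
    unfolding l1norm_upto[OF d]
    by (rule sum.cong) (use assms in \<open>auto simp: coeff_pCons split: nat.splits\<close>)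
  also have "\<dots> = \<bar>a\<bar> + \<bar>b\<bar>" by (simp add: sum.distrib)
  finally show ?thesis .
qed

lemma good_p0: assumes "0 < \<rho>" "\<rho> < 1" "0 < k"
  shows "good k \<rho> (monom (2 / (2 - \<rho> ^ k)) k + [: - (\<rho> ^ k) / (2 - \<rho> ^ k) :])
           ((2 + \<rho> ^ k) / (2 - \<rho> ^ k)) (\<rho> ^ k / (2 - \<rho> ^ k))"
proof -
  define R where "R = \<rho> ^ k"
  have rk0: "0 < R" unfolding R_def using assms by simp
  have rk1: "R < 1" unfolding R_def using assms by (simp add: power_less_one_iff)
  have d0: "2 - R > 0" using rk1 by simp
  define p where "p = monom (2 / (2 - R)) k + [: - R / (2 - R) :]"
  have deg: "degree p \<le> k" unfolding p_def
    by (metis degree_add_le degree_monom_le degree_pCons_0 le0)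
  have a1: "\<bar>2 / (2 - R)\<bar> = 2 / (2 - R)" using d0 by simp
  have a2: "\<bar>- R / (2 - R)\<bar> = R / (2 - R)" using d0 rk0 by simp
  have "l1norm p = 2 / (2 - R) + R / (2 - R)"
    unfolding p_def l1norm_two[OF assms(3)] a1 a2 ..
  also have "\<dots> = (2 + R) / (2 - R)" by (rule add_divide_distrib[symmetric])
  finally have l: "l1norm p = (2 + R) / (2 - R)" .
  have pv: "poly p x = (2 * x ^ k - R) / (2 - R)" for x
  proof -
    have "poly p x = 2 / (2 - R) * x ^ k + - R / (2 - R)" unfolding p_def by (simp add: poly_monom)
    also have "\<dots> = (2 * x ^ k) / (2 - R) + (- R) / (2 - R)" by simp
    also have "\<dots> = (2 * x ^ k + - R) / (2 - R)" by (rule add_divide_distrib[symmetric])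
    also have "\<dots> = (2 * x ^ k - R) / (2 - R)" by simp
    finally show ?thesis .
  qed
  have p1: "poly p 1 = 1" unfolding pv using d0 by simp
  have b: "\<bar>poly p x\<bar> \<le> R / (2 - R)" if x: "x \<in> {0..\<rho>}" for x
  proof -
    have "0 \<le> x ^ k" "x ^ k \<le> R" using x unfolding R_def by (auto intro: power_mono)
    then have h: "\<bar>2 * x ^ k - R\<bar> \<le> R" by linarith
    have "\<bar>poly p x\<bar> = \<bar>2 * x ^ k - R\<bar> / (2 - R)" unfolding pv abs_divide using d0 by simp
    also have "\<dots> \<le> R / (2 - R)" by (rule divide_right_mono[OF h]) (use d0 in simp)
    finally show ?thesis .
  qed
  have "good k \<rho> p ((2 + R) / (2 - R)) (R / (2 - R))" unfolding good_def using deg l p1 b by simp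
  then show ?thesis unfolding p_def R_def .
qed

lemma good_p_eps: assumes "0 \<le> \<epsilon>" "0 < \<rho>" "\<rho> < 1"
  shows "good k \<rho> (p_eps k \<rho> \<epsilon>) (l1norm (p_eps k \<rho> \<epsilon>))
     (2 * beta_of ((\<rho> + \<epsilon>) / (1 + \<epsilon>)) ^ k / (1 + beta_of ((\<rho> + \<epsilon>) / (1 + \<epsilon>)) ^ (2 * k)))"
  unfolding good_def using p_eps_props[OF assms] by auto

lemma goodj:
  assumes "k > 2" "0 < \<rho>" "\<rho> < 1" "M > 0" "j \<in> {-1..int M + 1}"
  shows "\<exists>p. good k \<rho> p (C_idx k \<rho> M j) (rho_idx k \<rho> M j)"
proof -
  consider "j = -1" | "j = 0" | "j = int M + 1" | "1 \<le> j \<and> j \<le> int M" using assms(5) by force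
  then show ?thesis
  proof cases
    case 1
    then show ?thesis using good_monom[OF assms(2), of k] unfolding C_idx_def rho_idx_def by auto
  next
    case 2
    then show ?thesis using good_p0[OF assms(2,3), of k] assms(1) unfolding C_idx_def rho_idx_def by auto
  next
    case 3
    have "good k \<rho> (p_eps k \<rho> 0) (C_star k \<rho>) (rho_star k \<rho>)"
      using good_p_eps[of 0 \<rho> k] assms(2,3) unfolding C_star_def rho_star_def by simp
    then show ?thesis using 3 unfolding C_idx_def rho_idx_def by auto
  next
    case 4
    have e: "0 \<le> eps_i \<rho> j" using assms(2) by (simp add: eps_i_def)
    show ?thesis using 4 good_p_eps[OF e assms(2,3), of k] unfolding C_idx_def rho_idx_def by auto
  qed
qed

theorem proposition5:
  fixes C \<rho> :: real and k M :: nat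
  assumes "C \<ge> 1" and "k > 2" and "0 < \<rho>" and "\<rho> < 1" and "M > 0"
  shows "rho_tilde k \<rho> C \<le>
    Max ((\<lambda>i. max ((C - C_idx k \<rho> M i) / (C_idx k \<rho> M (i + 1) - C_idx k \<rho> M i) * rho_idx k \<rho> M (i + 1)
                     + (C_idx k \<rho> M (i + 1) - C) / (C_idx k \<rho> M (i + 1) - C_idx k \<rho> M i) * rho_idx k \<rho> M i)
                    (rho_star k \<rho>)) ` {-1 .. int M})" (is "_ \<le> Max (?F ` ?I)")
proof -
  have fin: "finite (?F ` ?I)" by simp
  have geF: "?F i \<le> Max (?F ` ?I)" if "i \<in> ?I" for i
    using that fin by (intro Max_ge) auto
  have star_le: "rho_star k \<rho> \<le> Max (?F ` ?I)"
    using geF[of "-1"] by simp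
  have r0: "0 \<le> \<rho>" using assms by simp
  have Cm1: "C_idx k \<rho> M (-1) = 1" by (simp add: C_idx_def)
  have CM1: "C_idx k \<rho> M (int M + 1) = C_star k \<rho>" by (simp add: C_idx_def)
  show ?thesis
  proof (cases "C_star k \<rho> \<le> C")
    case True
    have "good k \<rho> (p_eps k \<rho> 0) (C_star k \<rho>) (rho_star k \<rho>)"
      using good_p_eps[of 0 \<rho> k] assms(3,4) unfolding C_star_def rho_star_def by simp
    then have "good k \<rho> (p_eps k \<rho> 0) C (rho_star k \<rho>)" using True by (rule good_mono)
    then have "rho_tilde k \<rho> C \<le> rho_star k \<rho>" using r0 by (rule good_rho_tilde)
    then show ?thesis using star_le by linarith
  next
    case False
    define S where "S = {i \<in> ?I. C_idx k \<rho> M i \<le> C}"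
    have finS: "finite S" unfolding S_def by (rule finite_subset[of _ ?I]) auto
    have m1S: "-1 \<in> S" unfolding S_def using Cm1 assms(1) by simp
    define i where "i = Max S"
    have iS: "i \<in> S" unfolding i_def using finS m1S by (intro Max_in) auto
    have iI: "i \<in> ?I" and Ci: "C_idx k \<rho> M i \<le> C" using iS unfolding S_def by auto
    have Ci1: "C < C_idx k \<rho> M (i + 1)"
    proof (cases "i + 1 \<le> int M")
      case True
      show ?thesis
      proof (rule ccontr)
        assume "\<not> ?thesis"
        then have "i + 1 \<in> S" unfolding S_def using True iI by auto
        then have "i + 1 \<le> Max S" by (rule Max_ge[OF finS])
        then have "i + 1 \<le> i" unfolding i_def .
        then show False by simp
      qed
    next
      case False
      then have "i = int M" using iI by auto
      then show ?thesis using CM1 \<open>\<not> C_star k \<rho> \<le> C\<close> by simp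
    qed
    define D where "D = C_idx k \<rho> M (i + 1) - C_idx k \<rho> M i"
    have D0: "D > 0" unfolding D_def using Ci Ci1 by simp
    define t where "t = (C_idx k \<rho> M (i + 1) - C) / D"
    have t0: "0 \<le> t" unfolding t_def using D0 Ci1 by simp
    have t1: "t \<le> 1" unfolding t_def using D0 Ci by (simp add: divide_le_eq D_def)
    have omt: "1 - t = (C - C_idx k \<rho> M i) / D"
      unfolding t_def using D0 by (simp add: field_simps D_def)
    obtain p where p: "good k \<rho> p (C_idx k \<rho> M i) (rho_idx k \<rho> M i)"
      using goodj[OF assms(2,3,4,5), of i] iI by auto
    obtain q where q: "good k \<rho> q (C_idx k \<rho> M (i + 1)) (rho_idx k \<rho> M (i + 1))"
      using goodj[OF assms(2,3,4,5), of "i + 1"] iI by auto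
    have g: "good k \<rho> (smult t p + smult (1 - t) q)
       (t * C_idx k \<rho> M i + (1 - t) * C_idx k \<rho> M (i + 1))
       (t * rho_idx k \<rho> M i + (1 - t) * rho_idx k \<rho> M (i + 1))"
      by (rule good_comb[OF p q t0 t1])
    have cC: "t * C_idx k \<rho> M i + (1 - t) * C_idx k \<rho> M (i + 1) = C"
    proof -
      have "t * C_idx k \<rho> M i + (1 - t) * C_idx k \<rho> M (i + 1)
            = C_idx k \<rho> M (i + 1) - t * D" unfolding D_def by (simp add: algebra_simps)
      also have "t * D = C_idx k \<rho> M (i + 1) - C" unfolding t_def using D0 by simp
      finally show ?thesis by simp
    qed
    have "rho_tilde k \<rho> C \<le> t * rho_idx k \<rho> M i + (1 - t) * rho_idx k \<rho> M (i + 1)"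
      using good_rho_tilde[OF g[unfolded cC] r0] .
    also have "\<dots> = (C - C_idx k \<rho> M i) / (C_idx k \<rho> M (i + 1) - C_idx k \<rho> M i) * rho_idx k \<rho> M (i + 1)
                     + (C_idx k \<rho> M (i + 1) - C) / (C_idx k \<rho> M (i + 1) - C_idx k \<rho> M i) * rho_idx k \<rho> M i"
      unfolding omt unfolding t_def D_def by simp
    also have "\<dots> \<le> ?F i" by simp
    also have "\<dots> \<le> Max (?F ` ?I)" using geF[OF iI] .
    finally show ?thesis .
  qed
qed

end
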